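(* Let $\alpha>-1$ and define polynomials $a_i(x)$, $i=1,2,3,\ldots$, by $$a_i(x)=\frac{1}{i!}\sum_{j=1}^{i}(-1)^{i+j+1}\binom{\alpha+1}{j-1}\binom{\alpha+2}{i-j}(\alpha+3)_{i-j}\,x^j .$$ Then $$\sum_{i=1}^{\infty}a_i(x)=-\frac{\sin\pi\alpha}{\pi}\,\frac{x}{(\alpha+2)(\alpha+3)}\;{}_1F_1\!\left(\begin{matrix}1\\ \alpha+4\end{matrix};-x\right),\qquad \alpha>-1 .$$ Moreover, if $\alpha$ is a nonnegative integer, then for every $k=1,2,3,\ldots$ $$\sum_{i=k}^{\infty}\binom{i}{k}a_i(x)=(-1)^{\alpha+k}a_k(-x).$$
   Context: Here $(c)_m=c(c+1)\cdots(c+m-1)$ is the Pochhammer symbol, $\binom{a}{m}=\frac{a(a-1)\cdots(a-m+1)}{m!}$ is the generalized binomial coefficient for real $a$ and nonnegative integer $m$, and ${}_1F_1$ is the confluent hypergeometric function ${}_1F_1(a;b;z)=\sum_{m\ge0}\frac{(a)_m}{(b)_m m!}z^m$. (These $a_i(x)$ are the coefficients of the infinite order differential equation $M\sum_{i\ge0}a_i(x)y^{(i)}(x)+xy''(x)+(\alpha+1-x)y'(x)+ny(x)=0$ satisfied by the generalized Laguerre polynomials $L_n^{\alpha,M}(x)$ orthogonal with respect to $\frac{1}{\Gamma(\alpha+1)}x^\alpha e^{-x}$ on $[0,\infty)$ plus a point mass $M$ at $0$.) *)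

theory Defs
  imports Complex_Main
begin

definition hyp1F1 :: "real \<Rightarrow> real \<Rightarrow> real \<Rightarrow> real" where
  "hyp1F1 a b z = (\<Sum>m. pochhammer a m / (pochhammer b m * fact m) * z ^ m)"

definition a_coef :: "real \<Rightarrow> nat \<Rightarrow> real \<Rightarrow> real" where
  "a_coef \<alpha> i x = (1 / fact i) * (\<Sum>j=1..i. (-1) ^ (i + j + 1) * ((\<alpha> + 1) gchoose (j - 1))
      * ((\<alpha> + 2) gchoose (i - j)) * pochhammer (\<alpha> + 3) (i - j) * x ^ j)"

end

theory Submission
  imports Defs "HOL-Analysis.Analysis" "HOL-Computational_Algebra.Formal_Power_Series"
begin

lemma gb_Suc: "((a::real) gchoose Suc k) = (a - of_nat k) * (a gchoose k) / of_nat (Suc k)"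
  using gbinomial_mult_1[of a k] by (simp add: field_simps)

lemma fact_mult_le_add: "fact m * fact n \<le> (fact (m + n) :: real)"
proof -
  have "real (fact m * fact n * ((m+n) choose m)) = real (fact (m+n))"
    using binomial_fact_lemma[of m "m+n"] by simp
  then have "fact m * fact n * real ((m+n) choose m) = fact (m+n)"
    by (simp only: of_nat_mult of_nat_fact)
  moreover have "fact m * fact n * 1 \<le> fact m * fact n * real ((m+n) choose m)"
    by (rule mult_left_mono) (simp_all add: Suc_leI)
  ultimately show ?thesis by simp
qed

lemma fact_shift_bound:
  assumes "m \<ge> 1" "j \<ge> 1"
  shows "real (j+1) * fact (m+1) * fact j \<le> 2 * (fact (m + j) :: real)"
  using assms(1)
proof (induction m rule: dec_induct)
  case base then show ?case by (simp add: algebra_simps)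
next
  case (step m)
  have "real (j+1) * fact (Suc m + 1) * fact j = real (m+2) * (real (j+1) * fact (m + 1) * fact j)"
    by (simp add: algebra_simps)
  also have "\<dots> \<le> real (m+2) * (2 * fact (m+j))" using step.IH by (rule mult_left_mono) simp
  also have "\<dots> \<le> real (Suc m + j) * (2 * fact (m+j))" using assms by (intro mult_right_mono) simp_all
  also have "\<dots> = 2 * fact (Suc m + j)" by simp
  finally show ?case .
qed

definition st :: "real \<Rightarrow> nat \<Rightarrow> nat \<Rightarrow> real" where
  "st \<alpha> j m = (-1)^m * ((\<alpha>+2) gchoose m) * pochhammer (\<alpha>+3) m / fact (m+j)"

definition vv :: "real \<Rightarrow> nat \<Rightarrow> real" where
  "vv \<alpha> m = \<bar>(\<alpha>+2) gchoose m\<bar> * pochhammer (\<alpha>+3) m / fact (m+1)"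

lemma vv_nonneg: "\<alpha> > -1 \<Longrightarrow> vv \<alpha> m \<ge> 0"
  unfolding vv_def by (intro divide_nonneg_pos mult_nonneg_nonneg pochhammer_nonneg) auto

lemma vv_Suc: "vv \<alpha> (Suc m) = vv \<alpha> m * (\<bar>\<alpha>+2 - m\<bar> * (\<alpha>+3+m) / ((real m+1)*(real m+2)))"
  if "\<alpha> > -1"
proof -
  have f: "fact (Suc m + 1) = (real m + 2) * fact (m + 1)" by (simp add: algebra_simps)
  have p: "pochhammer (\<alpha>+3) (Suc m) = (\<alpha>+3+m) * pochhammer (\<alpha>+3) m" by (simp add: pochhammer_rec')
  have g: "\<bar>(\<alpha>+2) gchoose Suc m\<bar> = \<bar>\<alpha> + 2 - m\<bar> * \<bar>(\<alpha>+2) gchoose m\<bar> / (real m + 1)"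
    unfolding gb_Suc by (simp add: abs_mult)
  have pos: "\<alpha>+3+m > 0" using that by simp
  define C where "C = \<bar>(\<alpha>+2) gchoose m\<bar>"
  define P where "P = pochhammer (\<alpha>+3) m"
  define F where "F = (fact (m+1) :: real)"
  have F0: "F \<noteq> 0" unfolding F_def by simp
  have "vv \<alpha> (Suc m) = (\<bar>\<alpha> + 2 - m\<bar> * C / (real m + 1)) * ((\<alpha>+3+m) * P) / ((real m + 2) * F)"
    unfolding vv_def f p g C_def P_def F_def by simp
  also have "\<dots> = (C * P / F) * (\<bar>\<alpha>+2 - m\<bar> * (\<alpha>+3+m) / ((real m+1)*(real m+2)))"
    by (simp add: divide_simps)
  also have "C * P / F = vv \<alpha> m" unfolding vv_def C_def P_def F_def by simp
  finally show ?thesis .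
qed

lemma vv_mono:
  assumes "\<alpha> > -1" "real m \<ge> \<alpha> + 2"
  shows "vv \<alpha> (Suc m) * ((real m+1)*(real m+2)) \<le> vv \<alpha> m * (real m*(real m+1))"
proof -
  have "\<bar>\<alpha>+2 - m\<bar> = m - \<alpha> - 2" using assms by simp
  then have "\<bar>\<alpha>+2 - m\<bar> * (\<alpha>+3+m) = real m*(real m+1) - (\<alpha>+2)*(\<alpha>+3)"
    by (simp add: algebra_simps)
  also have "\<dots> \<le> real m*(real m+1)" using assms by (simp add: mult_nonneg_nonneg)
  finally have le: "\<bar>\<alpha>+2 - m\<bar> * (\<alpha>+3+m) \<le> real m*(real m+1)" .
  have "vv \<alpha> (Suc m) * ((real m+1)*(real m+2)) = vv \<alpha> m * (\<bar>\<alpha>+2 - m\<bar> * (\<alpha>+3+m))"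
  proof -
    have d: "(real m+1)*(real m+2) \<noteq> 0" by simp
    have "vv \<alpha> (Suc m) * ((real m+1)*(real m+2)) = vv \<alpha> m * ((\<bar>\<alpha>+2 - m\<bar> * (\<alpha>+3+m)) / ((real m+1)*(real m+2))) * ((real m+1)*(real m+2))"
      using vv_Suc[OF assms(1), of m] by simp
    also have "\<dots> = vv \<alpha> m * (\<bar>\<alpha>+2 - m\<bar> * (\<alpha>+3+m))" using d by simp
    finally show ?thesis .
  qed
  also have "\<dots> \<le> vv \<alpha> m * (real m*(real m+1))" by (rule mult_left_mono[OF le vv_nonneg[OF assms(1)]])
  finally show ?thesis .
qed


lemma vv_bound:
  assumes "\<alpha> > -1"
  shows "\<exists>M K. M \<ge> 1 \<and> K \<ge> 0 \<and> (\<forall>m. m \<ge> M \<longrightarrow> vv \<alpha> m * (real m*(real m+1)) \<le> K)"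
proof -
  define M where "M = nat \<lceil>\<alpha>+2\<rceil> + 1"
  have M: "M \<ge> 1" "real M \<ge> \<alpha> + 2" unfolding M_def by linarith+
  define K where "K = vv \<alpha> M * (real M*(real M+1))"
  have bnd: "vv \<alpha> m * (real m*(real m+1)) \<le> K" if "m \<ge> M" for m
    using that
  proof (induction m rule: dec_induct)
    case base then show ?case by (simp add: K_def)
  next
    case (step m)
    have "vv \<alpha> (Suc m) * (real (Suc m) * (real (Suc m) + 1)) = vv \<alpha> (Suc m) * ((real m+1)*(real m+2))"
      by (simp add: algebra_simps)
    also have "\<dots> \<le> vv \<alpha> m * (real m*(real m+1))" 
    proof (rule vv_mono[OF assms])
      have "real M \<le> real m" using step.hyps(1) by simp
      then show "\<alpha> + 2 \<le> real m" using M(2) by linarith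
    qed
    finally show ?case using step.IH by linarith
  qed
  have K0: "K \<ge> 0" unfolding K_def using vv_nonneg[OF assms] by simp
  show ?thesis using M(1) K0 bnd by blast
qed

lemma summable_vv: assumes "\<alpha> > -1" shows "summable (vv \<alpha>)"
proof -
  obtain M K where KM0: "M \<ge> 1 \<and> K \<ge> 0 \<and> (\<forall>m. m \<ge> M \<longrightarrow> vv \<alpha> m * (real m*(real m+1)) \<le> K)"
    using vv_bound[OF assms] by blast
  have KM: "M \<ge> 1" "K \<ge> 0" "\<And>m. m \<ge> M \<Longrightarrow> vv \<alpha> m * (real m*(real m+1)) \<le> K"
    using KM0 by auto
  have s0: "summable (\<lambda>n. inverse (real n ^ 2))"
    by (rule inverse_power_summable) simp
  have s: "summable (\<lambda>n. K * inverse (real n ^ 2))"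
    by (rule summable_mult[OF s0])
  show ?thesis
  proof (rule summable_comparison_test'[OF s])
    fix n assume n: "M \<le> n"
    have pos: "real n > 0" using n KM(1) by simp
    have v0: "vv \<alpha> n \<ge> 0" by (rule vv_nonneg[OF assms])
    have "vv \<alpha> n * (real n*real n) \<le> vv \<alpha> n * (real n*(real n+1))"
      by (rule mult_left_mono[OF _ v0]) (use pos in simp)
    also have "\<dots> \<le> K" by (rule KM(3)[OF n])
    finally have "vv \<alpha> n * (real n*real n) \<le> K" .
    then have "vv \<alpha> n \<le> K / (real n*real n)" using pos by (simp add: pos_le_divide_eq)
    then show "norm (vv \<alpha> n) \<le> K * inverse (real n ^ 2)"
      using v0 by (simp add: power2_eq_square divide_inverse)
  qed
qed

lemma vv_lim: assumes "\<alpha> > -1" shows "(\<lambda>m. (m+1) * vv \<alpha> m) \<longlonglongrightarrow> 0"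
proof -
  obtain M K where KM0: "M \<ge> 1 \<and> K \<ge> 0 \<and> (\<forall>m. m \<ge> M \<longrightarrow> vv \<alpha> m * (real m*(real m+1)) \<le> K)"
    using vv_bound[OF assms] by blast
  have KM: "M \<ge> 1" "K \<ge> 0" "\<And>m. m \<ge> M \<Longrightarrow> vv \<alpha> m * (real m*(real m+1)) \<le> K"
    using KM0 by auto
  have "(\<lambda>m. K * inverse (real m)) \<longlonglongrightarrow> K * 0"
    by (intro tendsto_intros lim_inverse_n)
  then have l: "(\<lambda>m. K * inverse (real m)) \<longlonglongrightarrow> 0" by simp
  show ?thesis
  proof (rule tendsto_sandwich[OF _ _ tendsto_const l])
    show "\<forall>\<^sub>F n in sequentially. 0 \<le> (n+1) * vv \<alpha> n" using vv_nonneg[OF assms] by simp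
    show "\<forall>\<^sub>F n in sequentially. (n+1) * vv \<alpha> n \<le> K * inverse (real n)"
      using eventually_ge_at_top[of M]
    proof eventually_elim
      case (elim n)
      then have pos: "real n > 0" using KM by auto
      show ?case using KM(3)[OF elim] pos by (simp add: field_simps)
    qed
  qed
qed


definition SS :: "real \<Rightarrow> nat \<Rightarrow> real" where "SS \<alpha> j = suminf (st \<alpha> j)"

lemma st_bound:
  assumes "\<alpha> > -1" "j \<ge> 1"
  shows "\<bar>st \<alpha> j m\<bar> \<le> vv \<alpha> m"
proof -
  have P: "pochhammer (\<alpha>+3) m \<ge> 0" using assms by (intro pochhammer_nonneg) simp
  have F: "fact (m+1) \<le> (fact (m+j) :: real)" using assms by (intro fact_mono) simp
  have "\<bar>st \<alpha> j m\<bar> = \<bar>(\<alpha>+2) gchoose m\<bar> * pochhammer (\<alpha>+3) m / fact (m+j)"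
    unfolding st_def using P by (simp add: abs_mult)
  also have "\<dots> \<le> \<bar>(\<alpha>+2) gchoose m\<bar> * pochhammer (\<alpha>+3) m / fact (m+1)"
    by (rule divide_left_mono[OF F]) (use P in simp_all)
  finally show ?thesis unfolding vv_def .
qed

lemma summable_st:
  assumes "\<alpha> > -1" "j \<ge> 1"
  shows "summable (st \<alpha> j)" "summable (\<lambda>m. \<bar>st \<alpha> j m\<bar>)"
proof -
  show "summable (\<lambda>m. \<bar>st \<alpha> j m\<bar>)"
    by (rule summable_comparison_test'[OF summable_vv[OF assms(1)], of 0]) (use st_bound[OF assms] in simp)
  then show "summable (st \<alpha> j)" by (rule summable_rabs_cancel)
qed

lemma st_sums: "\<alpha> > -1 \<Longrightarrow> j \<ge> 1 \<Longrightarrow> st \<alpha> j sums SS \<alpha> j"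
  unfolding SS_def using summable_st by (simp add: summable_sums)

definition AA :: "real \<Rightarrow> nat \<Rightarrow> real" where
  "AA \<alpha> m = (-1)^m * ((\<alpha>+2) gchoose m) * pochhammer (\<alpha>+3) m"

lemma AA_Suc: "AA \<alpha> (Suc m) = AA \<alpha> m * ((real m - (\<alpha>+2)) * (real m + \<alpha> + 3) / (real m + 1))"
proof -
  have "AA \<alpha> (Suc m) = (-1) * (-1)^m * ((\<alpha> + 2 - m) * ((\<alpha>+2) gchoose m) / (real m + 1)) * ((\<alpha>+3+m) * pochhammer (\<alpha>+3) m)"
    unfolding AA_def gb_Suc pochhammer_rec' by (simp add: add_ac)
  also have "\<dots> = AA \<alpha> m * ((real m - (\<alpha>+2)) * (real m + \<alpha> + 3) / (real m + 1))"
    unfolding AA_def by (simp add: divide_simps) (simp add: algebra_simps)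
  finally show ?thesis .
qed

lemma st_AA: "st \<alpha> j m = AA \<alpha> m / fact (m+j)"
  unfolding st_def AA_def by simp

definition GG :: "real \<Rightarrow> nat \<Rightarrow> nat \<Rightarrow> real" where
  "GG \<alpha> j m = real m * AA \<alpha> m / fact (m+j)"

lemma tele_step:
  "(real j+\<alpha>+3)*(real j-\<alpha>-2) * st \<alpha> (Suc j) m - real j * st \<alpha> j m = GG \<alpha> j (Suc m) - GG \<alpha> j m"
proof -
  define A where "A = AA \<alpha> m"
  define F where "F = (fact (m+j) :: real)"
  have F0: "F > 0" unfolding F_def by simp
  have f1: "fact (m + Suc j) = (real m + real j + 1) * F" unfolding F_def by (simp add: algebra_simps)
  have f2: "fact (Suc m + j) = (real m + real j + 1) * F" unfolding F_def by (simp add: algebra_simps)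
  have d: "real m + real j + 1 \<noteq> 0" by (simp add: add_pos_nonneg)
  have lhs: "(real j+\<alpha>+3)*(real j-\<alpha>-2) * st \<alpha> (Suc j) m - real j * st \<alpha> j m
        = A * ((real j+\<alpha>+3)*(real j-\<alpha>-2) - real j * (real m + real j + 1)) / ((real m + real j + 1) * F)"
    unfolding st_AA f1 A_def[symmetric] F_def[symmetric] using F0 d by (simp add: divide_simps) (simp add: algebra_simps)
  have rhs: "GG \<alpha> j (Suc m) - GG \<alpha> j m
        = A * ((real m - (\<alpha>+2)) * (real m + \<alpha> + 3) - real m * (real m + real j + 1)) / ((real m + real j + 1) * F)"
    unfolding GG_def AA_Suc f2 A_def[symmetric] F_def[symmetric] using F0 d by (simp add: divide_simps) (simp add: algebra_simps)
  have "(real j+\<alpha>+3)*(real j-\<alpha>-2) - real j * (real m + real j + 1)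
      = (real m - (\<alpha>+2)) * (real m + \<alpha> + 3) - real m * (real m + real j + 1)"
    by (simp add: algebra_simps)
  then show ?thesis using lhs rhs by simp
qed

lemma GG_lim:
  assumes "\<alpha> > -1" "j \<ge> 1"
  shows "GG \<alpha> j \<longlonglongrightarrow> 0"
proof (rule tendsto_rabs_zero_cancel, rule tendsto_sandwich[OF _ _ tendsto_const vv_lim[OF assms(1)]])
  show "\<forall>\<^sub>F n in sequentially. 0 \<le> \<bar>GG \<alpha> j n\<bar>" by simp
  show "\<forall>\<^sub>F n in sequentially. \<bar>GG \<alpha> j n\<bar> \<le> real (n + 1) * vv \<alpha> n"
  proof (intro always_eventually allI)
    fix n
    have "\<bar>GG \<alpha> j n\<bar> = real n * \<bar>st \<alpha> j n\<bar>" unfolding GG_def st_AA by (simp add: abs_mult)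
    also have "\<dots> \<le> real n * vv \<alpha> n" by (rule mult_left_mono[OF st_bound[OF assms]]) simp
    also have "\<dots> \<le> real (n+1) * vv \<alpha> n" by (rule mult_right_mono[OF _ vv_nonneg[OF assms(1)]]) simp
    finally show "\<bar>GG \<alpha> j n\<bar> \<le> real (n + 1) * vv \<alpha> n" .
  qed
qed

lemma SS_rec:
  assumes "\<alpha> > -1" "j \<ge> 1"
  shows "(real j+\<alpha>+3)*(real j-\<alpha>-2) * SS \<alpha> (Suc j) = real j * SS \<alpha> j"
proof -
  have j1: "Suc j \<ge> 1" by simp
  have s: "(\<lambda>m. (real j+\<alpha>+3)*(real j-\<alpha>-2) * st \<alpha> (Suc j) m - real j * st \<alpha> j m) sums
        ((real j+\<alpha>+3)*(real j-\<alpha>-2) * SS \<alpha> (Suc j) - real j * SS \<alpha> j)"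
    by (intro sums_diff sums_mult st_sums assms j1)
  have "(\<lambda>M. \<Sum>m<M. (real j+\<alpha>+3)*(real j-\<alpha>-2) * st \<alpha> (Suc j) m - real j * st \<alpha> j m) = (\<lambda>M. GG \<alpha> j M)"
    unfolding tele_step by (rule ext, subst sum_lessThan_telescope) (simp add: GG_def)
  with s have "GG \<alpha> j \<longlonglongrightarrow> ((real j+\<alpha>+3)*(real j-\<alpha>-2) * SS \<alpha> (Suc j) - real j * SS \<alpha> j)"
    unfolding sums_def by simp
  from LIMSEQ_unique[OF this GG_lim[OF assms]] show ?thesis by simp
qed


lemma pos_notin_nonpos_Ints: "(x::real) > 0 \<Longrightarrow> x \<notin> \<int>\<^sub>\<le>\<^sub>0"
  using nonpos_Ints_nonpos by fastforce

lemma vv_AA: "vv \<alpha> m = \<bar>AA \<alpha> m\<bar> / fact (m+1)" if "\<alpha> > -1"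
proof -
  have P: "pochhammer (\<alpha>+3) m \<ge> 0" using that by (intro pochhammer_nonneg) simp
  show ?thesis unfolding vv_def AA_def using P by (simp add: abs_mult)
qed

lemma SS_tail_bound:
  assumes "\<alpha> > -1" "j \<ge> 1"
  shows "\<bar>fact j * SS \<alpha> j - 1\<bar> \<le> 2 * suminf (\<lambda>m. vv \<alpha> (Suc m)) / (real j + 1)"
proof -
  have s0: "(\<lambda>m. fact j * st \<alpha> j m) sums (fact j * SS \<alpha> j)"
    by (intro sums_mult st_sums assms)
  have h0: "fact j * st \<alpha> j 0 = 1" unfolding st_def by simp
  have s1: "(\<lambda>m. fact j * st \<alpha> j (Suc m)) sums (fact j * SS \<alpha> j - 1)"
    using s0 h0 by (subst sums_Suc_iff) simp
  have sv: "summable (\<lambda>m. vv \<alpha> (Suc m))"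
    using summable_vv[OF assms(1)] by (subst summable_Suc_iff)
  have sg: "summable (\<lambda>m. 2 * vv \<alpha> (Suc m) / (real j + 1))"
    by (intro summable_divide summable_mult sv)
  have bnd: "norm (fact j * st \<alpha> j (Suc m)) \<le> 2 * vv \<alpha> (Suc m) / (real j + 1)" for m
  proof -
    have fb: "real (j+1) * fact (Suc m+1) * fact j \<le> 2 * (fact (Suc m + j) :: real)"
      by (rule fact_shift_bound) (use assms in simp_all)
    have pos1: "(fact (Suc m + j) :: real) > 0" "(fact (Suc m + 1) :: real) > 0" "real j + 1 > 0" by simp_all
    have "fact j / fact (Suc m + j) \<le> 2 / ((real j + 1) * fact (Suc m + 1))"
      using fb pos1 by (simp add: divide_simps) (simp add: algebra_simps)
    then have "\<bar>AA \<alpha> (Suc m)\<bar> * (fact j / fact (Suc m + j)) \<le> \<bar>AA \<alpha> (Suc m)\<bar> * (2 / ((real j + 1) * fact (Suc m + 1)))"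
      by (rule mult_left_mono) simp
    then show ?thesis unfolding st_AA vv_AA[OF assms(1)] by (simp add: abs_mult field_simps)
  qed
  have "\<bar>fact j * SS \<alpha> j - 1\<bar> = norm (suminf (\<lambda>m. fact j * st \<alpha> j (Suc m)))"
    using s1 by (simp add: sums_iff)
  also have "\<dots> \<le> suminf (\<lambda>m. 2 * vv \<alpha> (Suc m) / (real j + 1))"
    by (rule norm_suminf_le[OF bnd sg])
  also have "\<dots> = 2 * suminf (\<lambda>m. vv \<alpha> (Suc m)) / (real j + 1)"
    using sv by (simp add: suminf_divide suminf_mult)
  finally show ?thesis .
qed

lemma SS_asymp:
  assumes "\<alpha> > -1"
  shows "(\<lambda>n. fact (Suc n) * SS \<alpha> (Suc n)) \<longlonglongrightarrow> 1"
proof -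
  define V where "V = suminf (\<lambda>m. vv \<alpha> (Suc m))"
  have l: "(\<lambda>n. 2 * V * inverse (real (Suc n))) \<longlonglongrightarrow> 2 * V * 0"
    by (intro tendsto_intros LIMSEQ_inverse_real_of_nat)
  have "(\<lambda>n. fact (Suc n) * SS \<alpha> (Suc n) - 1) \<longlonglongrightarrow> 0"
  proof (rule tendsto_rabs_zero_cancel, rule tendsto_sandwich[OF _ _ tendsto_const])
    show "\<forall>\<^sub>F n in sequentially. 0 \<le> \<bar>fact (Suc n) * SS \<alpha> (Suc n) - 1\<bar>" by simp
    show "\<forall>\<^sub>F n in sequentially. \<bar>fact (Suc n) * SS \<alpha> (Suc n) - 1\<bar> \<le> 2 * V * inverse (real (Suc n))"
    proof (intro always_eventually allI)
      fix n
      have "\<bar>fact (Suc n) * SS \<alpha> (Suc n) - 1\<bar> \<le> 2 * V / (real (Suc n) + 1)"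
        unfolding V_def by (rule SS_tail_bound[OF assms]) simp
      also have "\<dots> \<le> 2 * V * inverse (real (Suc n))"
      proof -
        have "V \<ge> 0" unfolding V_def
          by (intro suminf_nonneg vv_nonneg[OF assms]) (use summable_vv[OF assms] in \<open>subst summable_Suc_iff\<close>)
        then have "V * (1 + real n) \<le> V * (2 + real n)" by (intro mult_left_mono) simp_all
        then show ?thesis by (simp add: divide_simps)
      qed
      finally show "\<bar>fact (Suc n) * SS \<alpha> (Suc n) - 1\<bar> \<le> 2 * V * inverse (real (Suc n))" .
    qed
    show "(\<lambda>n. 2 * V * inverse (real (Suc n))) \<longlonglongrightarrow> 0" using l by simp
  qed
  then show ?thesis using tendsto_add[OF _ tendsto_const[of 1]] by fastforce
qed

definition bb :: "real \<Rightarrow> nat \<Rightarrow> real" where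
  "bb \<alpha> j = - ((\<alpha>+1) gchoose (j - 1)) * SS \<alpha> j"

lemma bb_rec:
  assumes "\<alpha> > -1" "j \<ge> 1"
  shows "(real j - \<alpha> - 2) * (bb \<alpha> j + (real j + \<alpha> + 3) * bb \<alpha> (Suc j)) = 0"
proof -
  obtain k where k: "j = Suc k" using assms(2) by (cases j) auto
  have g: "((\<alpha>+1) gchoose j) * real j = ((\<alpha>+1) gchoose (j-1)) * (\<alpha> + 2 - real j)"
    unfolding k gb_Suc by (simp add: field_simps)
  have "(real j - \<alpha> - 2) * (real j + \<alpha> + 3) * bb \<alpha> (Suc j)
      = - ((\<alpha>+1) gchoose j) * ((real j+\<alpha>+3)*(real j-\<alpha>-2) * SS \<alpha> (Suc j))"
    unfolding bb_def by (simp add: algebra_simps)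
  also have "\<dots> = - ((\<alpha>+1) gchoose j) * real j * SS \<alpha> j"
    using SS_rec[OF assms] by simp
  also have "\<dots> = - ((\<alpha>+1) gchoose (j-1)) * (\<alpha> + 2 - real j) * SS \<alpha> j"
    using g by simp
  also have "\<dots> = - (real j - \<alpha> - 2) * bb \<alpha> j" unfolding bb_def by (simp add: algebra_simps)
  finally show ?thesis by (simp add: algebra_simps)
qed

lemma bb_zero:
  assumes "\<alpha> > -1" "j \<ge> 1" "real j = \<alpha> + 2"
  shows "bb \<alpha> j = 0"
proof -
  have "real j * SS \<alpha> j = 0" using SS_rec[OF assms(1,2)] assms(3) by simp
  then have "SS \<alpha> j = 0" using assms(2) by simp
  then show ?thesis unfolding bb_def by simp
qed


lemma P1_lim:
  "(\<lambda>n. ((\<alpha>+1) gchoose n) * (-1)^n * exp ((\<alpha>+2) * ln (real n))) \<longlonglongrightarrow> rGamma (-\<alpha>-1)"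
proof -
  have "(\<lambda>n. ((\<alpha>+1) gchoose n) / ((-1)^n / exp (((\<alpha>+1)+1) * of_real (ln (real n))))) \<longlonglongrightarrow> inverse (Gamma (- (\<alpha>+1)))"
    by (rule gbinomial_asymptotic)
  moreover have "\<And>n. ((\<alpha>+1) gchoose n) / ((-1)^n / exp (((\<alpha>+1)+1) * of_real (ln (real n))))
      = ((\<alpha>+1) gchoose n) * (-1)^n * exp ((\<alpha>+2) * ln (real n))"
  proof -
    fix n
    have a: "(\<alpha>+1)+1 = \<alpha>+2" by simp
    show "((\<alpha>+1) gchoose n) / ((-1)^n / exp (((\<alpha>+1)+1) * of_real (ln (real n))))
      = ((\<alpha>+1) gchoose n) * (-1)^n * exp ((\<alpha>+2) * ln (real n))"
      unfolding a of_real_eq_id id_def by (cases "even n") simp_all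
  qed
  ultimately show ?thesis by (simp add: rGamma_inverse_Gamma)
qed

lemma P3a_lim:
  assumes "\<alpha> > -1"
  shows "(\<lambda>n. Gamma (real n + \<alpha> + 4) * exp (- (\<alpha>+3) * ln (real n)) / fact n) \<longlonglongrightarrow> 1"
proof -
  have g0: "Gamma (\<alpha>+4) \<noteq> 0" using assms by (intro Gamma_nonzero pos_notin_nonpos_Ints) simp
  have lim1: "(\<lambda>n. ((-(\<alpha>+4)) gchoose n) / ((-1)^n / exp ((-(\<alpha>+4)+1) * of_real (ln (real n))))) \<longlonglongrightarrow> inverse (Gamma (- (-(\<alpha>+4))))"
    by (rule gbinomial_asymptotic)
  have eq1: "((-(\<alpha>+4)) gchoose n) / ((-1)^n / exp ((-(\<alpha>+4)+1) * of_real (ln (real n))))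
      = Gamma (real n + \<alpha> + 4) * exp (- (\<alpha>+3) * ln (real n)) / fact n / Gamma (\<alpha>+4)" for n
  proof -
    have p: "pochhammer (\<alpha>+4) n = Gamma (\<alpha> + 4 + real n) / Gamma (\<alpha>+4)"
      using assms by (intro pochhammer_Gamma pos_notin_nonpos_Ints) simp
    have e: "((-1::real)^n) * (-1)^n = 1" by (simp flip: power_mult_distrib)
    have gp: "(-(\<alpha>+4)) gchoose n = (-1)^n * pochhammer (\<alpha>+4) n / fact n"
      by (simp add: gbinomial_pochhammer) (simp add: add_ac)
    have a: "- (\<alpha> + 4) + 1 = - (\<alpha>+3)" by simp
    have gg: "Gamma (\<alpha> + 4 + real n) = Gamma (real n + \<alpha> + 4)" by (simp add: add_ac)
    show ?thesis unfolding gp p a gg of_real_eq_id id_def using g0 by (cases "even n") (simp_all add: divide_simps)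
  qed
  have "(\<lambda>n. Gamma (real n + \<alpha> + 4) * exp (- (\<alpha>+3) * ln (real n)) / fact n / Gamma (\<alpha>+4)) \<longlonglongrightarrow> inverse (Gamma (- (-(\<alpha>+4))))"
    using lim1 unfolding eq1 .
  then have "(\<lambda>n. Gamma (real n + \<alpha> + 4) * exp (- (\<alpha>+3) * ln (real n)) / fact n / Gamma (\<alpha>+4)) \<longlonglongrightarrow> inverse (Gamma (\<alpha>+4))"
    by (simp only: minus_minus)
  then have "(\<lambda>n. Gamma (real n + \<alpha> + 4) * exp (- (\<alpha>+3) * ln (real n)) / fact n / Gamma (\<alpha>+4) * Gamma (\<alpha>+4)) \<longlonglongrightarrow> inverse (Gamma (\<alpha>+4)) * Gamma (\<alpha>+4)"
    by (intro tendsto_intros)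
  then show ?thesis using g0 by simp
qed

lemma P3_lim:
  assumes "\<alpha> > -1"
  shows "(\<lambda>n. Gamma (real n + \<alpha> + 4) / (fact (Suc n) * exp ((\<alpha>+2) * ln (real n)))) \<longlonglongrightarrow> 1"
proof -
  have l2: "(\<lambda>n. 1 - inverse (real (Suc n))) \<longlonglongrightarrow> 1 - 0"
    by (intro tendsto_intros LIMSEQ_inverse_real_of_nat)
  have "(\<lambda>n. (Gamma (real n + \<alpha> + 4) * exp (- (\<alpha>+3) * ln (real n)) / fact n) * (1 - inverse (real (Suc n)))) \<longlonglongrightarrow> 1 * (1 - 0)"
    by (intro tendsto_mult P3a_lim assms l2)
  then have l: "(\<lambda>n. (Gamma (real n + \<alpha> + 4) * exp (- (\<alpha>+3) * ln (real n)) / fact n) * (1 - inverse (real (Suc n)))) \<longlonglongrightarrow> 1"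
    by simp
  show ?thesis
  proof (rule Lim_transform_eventually[OF l])
    show "\<forall>\<^sub>F n in sequentially. Gamma (real n + \<alpha> + 4) * exp (- (\<alpha>+3) * ln (real n)) / fact n * (1 - inverse (real (Suc n)))
       = Gamma (real n + \<alpha> + 4) / (fact (Suc n) * exp ((\<alpha>+2) * ln (real n)))"
      using eventually_gt_at_top[of "0::nat"]
    proof eventually_elim
      case (elim n)
      have e: "exp (- (\<alpha>+3) * ln (real n)) = inverse (exp ((\<alpha>+2) * ln (real n))) / real n"
      proof -
        have "exp (- (\<alpha>+3) * ln (real n)) = exp (- ((\<alpha>+2) * ln (real n)) + (- ln (real n)))"
          by (simp add: algebra_simps)
        also have "\<dots> = exp (- ((\<alpha>+2) * ln (real n))) * exp (- ln (real n))"
          by (rule exp_add)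
        also have "\<dots> = inverse (exp ((\<alpha>+2) * ln (real n))) / real n"
          using elim by (simp add: exp_minus divide_inverse)
        finally show ?thesis .
      qed
      have i: "1 - inverse (real (Suc n)) = real n / real (Suc n)"
        by (simp add: divide_simps)
      show ?case unfolding e i using elim by (simp add: divide_simps)
    qed
  qed
qed

definition WW :: "real \<Rightarrow> nat \<Rightarrow> real" where
  "WW \<alpha> n = (-1)^(Suc n) * Gamma (real n + \<alpha> + 4) * bb \<alpha> (Suc n)"

lemma WW_lim:
  assumes "\<alpha> > -1"
  shows "WW \<alpha> \<longlonglongrightarrow> rGamma (-\<alpha>-1)"
proof -
  have "(\<lambda>n. (((\<alpha>+1) gchoose n) * (-1)^n * exp ((\<alpha>+2) * ln (real n))) * (fact (Suc n) * SS \<alpha> (Suc n))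
        * (Gamma (real n + \<alpha> + 4) / (fact (Suc n) * exp ((\<alpha>+2) * ln (real n))))) \<longlonglongrightarrow> rGamma (-\<alpha>-1) * 1 * 1"
    by (intro tendsto_mult P1_lim SS_asymp P3_lim assms)
  moreover have "(((\<alpha>+1) gchoose n) * (-1)^n * exp ((\<alpha>+2) * ln (real n))) * (fact (Suc n) * SS \<alpha> (Suc n))
        * (Gamma (real n + \<alpha> + 4) / (fact (Suc n) * exp ((\<alpha>+2) * ln (real n)))) = WW \<alpha> n" for n
  proof -
    have "exp ((\<alpha>+2) * ln (real n)) > 0" "(fact (Suc n) :: real) > 0" by simp_all
    then show ?thesis unfolding WW_def bb_def by (simp add: divide_simps)
  qed
  ultimately show ?thesis by simp
qed

lemma WW_step:
  assumes "\<alpha> > -1" "real n + 1 \<noteq> \<alpha> + 2"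
  shows "WW \<alpha> (Suc n) = WW \<alpha> n"
proof -
  have r0: "bb \<alpha> (Suc n) + (real (Suc n) + \<alpha> + 3) * bb \<alpha> (Suc (Suc n)) = 0"
    using bb_rec[OF assms(1), of "Suc n"] assms(2) by simp
  have r: "bb \<alpha> (Suc n) = - ((real n + \<alpha> + 4) * bb \<alpha> (Suc (Suc n)))"
  proof -
    have c: "real (Suc n) + \<alpha> + 3 = real n + \<alpha> + 4" by simp
    from r0 have "bb \<alpha> (Suc n) + (real n + \<alpha> + 4) * bb \<alpha> (Suc (Suc n)) = 0" by (simp only: c)
    then show ?thesis by linarith
  qed
  have g: "Gamma (real n + \<alpha> + 4 + 1) = (real n + \<alpha> + 4) * Gamma (real n + \<alpha> + 4)"
    using assms by (intro Gamma_plus1 pos_notin_nonpos_Ints) simp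
  have "WW \<alpha> (Suc n) = (-1)^n * Gamma (real n + \<alpha> + 4 + 1) * bb \<alpha> (Suc (Suc n))"
    unfolding WW_def by (simp add: add_ac)
  also have "\<dots> = (-1)^n * Gamma (real n + \<alpha> + 4) * ((real (Suc n) + \<alpha> + 3) * bb \<alpha> (Suc (Suc n)))"
    unfolding g by (simp add: algebra_simps)
  also have "\<dots> = WW \<alpha> n" unfolding WW_def r by simp
  finally show ?thesis .
qed

lemma bb_large:
  assumes "\<alpha> > -1"
  shows "\<exists>N. \<forall>n\<ge>N. bb \<alpha> (Suc n) = rGamma (-\<alpha>-1) * (-1)^(Suc n) * rGamma (real n + \<alpha> + 4)"
proof -
  define N where "N = nat \<lfloor>\<alpha>\<rfloor> + 2"
  have N: "real N > \<alpha> + 1" unfolding N_def by linarith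
  have c: "WW \<alpha> n = WW \<alpha> N" if "n \<ge> N" for n
    using that
  proof (induction n rule: dec_induct)
    case base then show ?case by simp
  next
    case (step m)
    have "real m \<ge> real N" using step.hyps by simp
    then have "real m + 1 \<noteq> \<alpha> + 2" using N by linarith
    then show ?case using WW_step[OF assms] step.IH by simp
  qed
  have ev: "eventually (\<lambda>n. WW \<alpha> N = WW \<alpha> n) sequentially"
    by (rule eventually_sequentiallyI[of N]) (rule c[symmetric])
  have "WW \<alpha> \<longlonglongrightarrow> WW \<alpha> N"
    by (rule Lim_transform_eventually[OF tendsto_const ev])
  from LIMSEQ_unique[OF this WW_lim[OF assms]] have K: "WW \<alpha> N = rGamma (-\<alpha>-1)" .
  have X: "bb \<alpha> (Suc n) = rGamma (-\<alpha>-1) * (-1)^(Suc n) * rGamma (real n + \<alpha> + 4)" if "n \<ge> N" for n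
  proof -
    have g0: "Gamma (real n + \<alpha> + 4) \<noteq> 0" using assms by (intro Gamma_nonzero pos_notin_nonpos_Ints) simp
    have "WW \<alpha> n = rGamma (-\<alpha>-1)" using c[OF that] K by (rule trans)
    then have eq: "(-1)^(Suc n) * Gamma (real n + \<alpha> + 4) * bb \<alpha> (Suc n) = rGamma (-\<alpha>-1)" unfolding WW_def .
    define G where "G = Gamma (real n + \<alpha> + 4)"
    define s where "s = ((-1::real)^(Suc n))"
    have ss: "s * s = 1" unfolding s_def by (cases "even n") simp_all
    have eq': "s * G * bb \<alpha> (Suc n) = rGamma (-\<alpha>-1)" using eq unfolding s_def G_def .
    have "bb \<alpha> (Suc n) = (s * s) * (G * inverse G) * bb \<alpha> (Suc n)" using ss g0 unfolding G_def by simp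
    also have "\<dots> = s * inverse G * (s * G * bb \<alpha> (Suc n))" by (simp only: mult.assoc mult.left_commute)
    also have "\<dots> = rGamma (-\<alpha>-1) * s * inverse G" unfolding eq' by (simp add: ac_simps)
    finally show ?thesis unfolding s_def G_def rGamma_inverse_Gamma .
  qed
  show ?thesis by (rule exI[of _ N]) (use X in blast)
qed

lemma bb_closed:
  assumes "\<alpha> > -1" "j \<ge> 1"
  shows "bb \<alpha> j = rGamma (-\<alpha>-1) * (-1)^j * rGamma (real j + \<alpha> + 3)"
proof -
  obtain N where N: "\<And>n. n \<ge> N \<Longrightarrow> bb \<alpha> (Suc n) = rGamma (-\<alpha>-1) * (-1)^(Suc n) * rGamma (real n + \<alpha> + 4)"
    using bb_large[OF assms(1)] by blast
  define P where "P = (\<lambda>j. bb \<alpha> j = rGamma (-\<alpha>-1) * (-1)^j * rGamma (real j + \<alpha> + 3))"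
  have big: "P j" if jN: "j \<ge> Suc N" for j
  proof -
    obtain n where n: "j = Suc n" "n \<ge> N" using jN by (cases j) auto
    show ?thesis unfolding P_def n using N[OF n(2)] by (simp add: add_ac)
  qed
  have "P j" if "1 \<le> j" "j \<le> Suc N" for j
    using that(2)
  proof (induction j rule: inc_induct)
    case base then show ?case by (rule big) simp
  next
    case (step k)
    have k1: "k \<ge> 1" using that(1) step.hyps(1) by linarith
    show ?case
    proof (cases "real k = \<alpha> + 2")
      case True
      have "-\<alpha>-1 = - real (k - 1)" using True k1 by (simp add: of_nat_diff)
      then have "rGamma (-\<alpha>-1) = 0" by (simp add: rGamma_nonpos_Int minus_of_nat_in_nonpos_Ints)
      then show ?thesis unfolding P_def using bb_zero[OF assms(1) k1 True] by simp
    next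
      case False
      have "(real k - \<alpha> - 2) * (bb \<alpha> k + (real k + \<alpha> + 3) * bb \<alpha> (Suc k)) = 0"
        by (rule bb_rec[OF assms(1) k1])
      then have r: "bb \<alpha> k = - ((real k + \<alpha> + 3) * bb \<alpha> (Suc k))"
        using False by (simp add: eq_neg_iff_add_eq_0)
      have IH: "bb \<alpha> (Suc k) = rGamma (-\<alpha>-1) * (-1)^(Suc k) * rGamma ((real k + \<alpha> + 3) + 1)"
        using step.IH unfolding P_def by (simp add: add_ac)
      have g: "(real k + \<alpha> + 3) * rGamma ((real k + \<alpha> + 3) + 1) = rGamma (real k + \<alpha> + 3)"
        by (rule rGamma_plus1)
      have "- ((real k + \<alpha> + 3) * (rGamma (-\<alpha>-1) * (-1)^(Suc k) * rGamma ((real k + \<alpha> + 3) + 1)))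
          = rGamma (-\<alpha>-1) * (-1)^k * ((real k + \<alpha> + 3) * rGamma ((real k + \<alpha> + 3) + 1))" by simp
      then show ?thesis unfolding P_def r IH g .
    qed
  qed
  note inner = this
  show ?thesis
  proof (cases "j \<le> Suc N")
    case True from inner[OF assms(2) True] show ?thesis unfolding P_def .
  next
    case False then have "j \<ge> Suc N" by simp
    then show ?thesis using big unfolding P_def by blast
  qed
qed


definition ff :: "real \<Rightarrow> real \<Rightarrow> nat \<times> nat \<Rightarrow> real" where
  "ff \<alpha> x pm = ((\<alpha>+1) gchoose (fst pm)) * x^(Suc (fst pm)) * st \<alpha> (Suc (fst pm)) (snd pm)"

lemma a_coef_diag:
  "a_coef \<alpha> (Suc i) x = - (\<Sum>p\<le>i. ff \<alpha> x (p, i - p))"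
proof -
  have "a_coef \<alpha> (Suc i) x = (1 / fact (Suc i)) * (\<Sum>p=0..i. (-1) ^ (Suc i + Suc p + 1) * ((\<alpha> + 1) gchoose p)
      * ((\<alpha> + 2) gchoose (i - p)) * pochhammer (\<alpha> + 3) (i - p) * x ^ Suc p)"
  proof -
    have sh: "(\<Sum>j=1..Suc i. G j) = (\<Sum>p=0..i. G (Suc p))" for G :: "nat \<Rightarrow> real"
      using sum.shift_bounds_cl_Suc_ivl[of G 0 i] by simp
    show ?thesis unfolding a_coef_def sh by simp
  qed
  also have "\<dots> = (\<Sum>p\<le>i. - ff \<alpha> x (p, i - p))"
    unfolding sum_distrib_left atLeast0AtMost
  proof (rule sum.cong[OF refl])
    fix p assume "p \<in> {..i}"
    then obtain d where d: "i = p + d" by (auto simp: le_iff_add)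
    have s: "(-1::real) ^ (Suc i + Suc p + 1) = - ((-1) ^ d)"
      unfolding d by (simp add: power_add flip: mult_2)
    have f: "i - p + Suc p = Suc i" unfolding d by simp
    show "1 / fact (Suc i) * ((-1) ^ (Suc i + Suc p + 1) * ((\<alpha> + 1) gchoose p) * ((\<alpha> + 2) gchoose (i - p)) *
          pochhammer (\<alpha> + 3) (i - p) * x ^ Suc p) = - ff \<alpha> x (p, i - p)"
      unfolding ff_def st_def s f by (simp add: d ac_simps)
  qed
  finally show ?thesis by (simp add: sum_negf)
qed

lemma gb_abs_bound: "\<bar>(c::real) gchoose p\<bar> \<le> (\<bar>c\<bar>+1)^p"
proof (induction p)
  case 0 then show ?case by simp
next
  case (Suc p)
  have t: "\<bar>c - real p\<bar> \<le> \<bar>c\<bar> + real p" using abs_triangle_ineq4[of c "real p"] by simp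
  have "\<bar>c\<bar> * real p \<ge> 0" by simp
  moreover have "(\<bar>c\<bar>+1) * (real p + 1) = \<bar>c\<bar> * real p + \<bar>c\<bar> + real p + 1" by (simp add: algebra_simps)
  ultimately have "\<bar>c - real p\<bar> \<le> (\<bar>c\<bar>+1) * (real p + 1)" using t by linarith
  then have q: "\<bar>c - real p\<bar> / (real p + 1) \<le> \<bar>c\<bar>+1" by (simp add: divide_simps mult.commute)
  have "\<bar>c gchoose Suc p\<bar> = (\<bar>c - real p\<bar> / (real p + 1)) * \<bar>c gchoose p\<bar>"
    unfolding gb_Suc by (simp add: abs_mult)
  also have "\<dots> \<le> (\<bar>c\<bar>+1) * (\<bar>c\<bar>+1)^p"
    by (rule mult_mono[OF q Suc.IH]) simp_all
  finally show ?case by simp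
qed

definition uu :: "real \<Rightarrow> real \<Rightarrow> nat \<Rightarrow> real" where
  "uu \<alpha> x p = \<bar>x\<bar> * (inverse (fact p) * ((\<bar>\<alpha>+1\<bar>+1) * \<bar>x\<bar>)^p)"

lemma summable_uu: "summable (uu \<alpha> x)"
  unfolding uu_def by (intro summable_mult summable_exp)

lemma ff_bound:
  assumes "\<alpha> > -1"
  shows "\<bar>ff \<alpha> x (p, m)\<bar> \<le> uu \<alpha> x p * vv \<alpha> m"
proof -
  have F: "fact (m+1) * fact p \<le> (fact (m + Suc p) :: real)"
    using fact_mult_le_add[of "m+1" p] by simp
  have st: "\<bar>st \<alpha> (Suc p) m\<bar> \<le> vv \<alpha> m / fact p"
  proof -
    have "\<bar>st \<alpha> (Suc p) m\<bar> = \<bar>AA \<alpha> m\<bar> / fact (m + Suc p)" unfolding st_AA by simp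
    also have "\<dots> \<le> \<bar>AA \<alpha> m\<bar> / (fact (m+1) * fact p)"
      by (rule divide_left_mono[OF F]) simp_all
    also have "\<dots> = vv \<alpha> m / fact p" unfolding vv_AA[OF assms] by simp
    finally show ?thesis .
  qed
  have "\<bar>ff \<alpha> x (p, m)\<bar> = \<bar>(\<alpha>+1) gchoose p\<bar> * (\<bar>x\<bar> * \<bar>x\<bar>^p) * \<bar>st \<alpha> (Suc p) m\<bar>"
    unfolding ff_def by (simp add: abs_mult power_abs)
  also have "\<dots> \<le> (\<bar>\<alpha>+1\<bar>+1)^p * (\<bar>x\<bar> * \<bar>x\<bar>^p) * (vv \<alpha> m / fact p)"
    by (intro mult_mono gb_abs_bound st) (simp_all add: vv_nonneg[OF assms])
  also have "\<dots> = uu \<alpha> x p * vv \<alpha> m"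
    unfolding uu_def power_mult_distrib by (simp add: divide_inverse mult_ac)
  finally show ?thesis .
qed

lemma ff_summable:
  assumes "\<alpha> > -1"
  shows "ff \<alpha> x summable_on UNIV"
proof -
  define V where "V = suminf (vv \<alpha>)"
  have uu0: "uu \<alpha> x p \<ge> 0" for p unfolding uu_def by simp
  have g: "(\<lambda>pm. uu \<alpha> x (fst pm) * vv \<alpha> (snd pm)) summable_on Sigma UNIV (\<lambda>_. UNIV)"
  proof (rule summable_on_SigmaI)
    fix p :: nat
    have "(\<lambda>m. uu \<alpha> x p * vv \<alpha> m) sums (uu \<alpha> x p * V)"
      unfolding V_def by (intro sums_mult summable_sums summable_vv assms)
    moreover have "summable (\<lambda>m. norm (uu \<alpha> x p * vv \<alpha> m))"
      using uu0 vv_nonneg[OF assms] by (simp add: summable_mult summable_vv[OF assms])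
    ultimately have "((\<lambda>m. uu \<alpha> x p * vv \<alpha> m) has_sum uu \<alpha> x p * V) UNIV"
      by (intro norm_summable_imp_has_sum)
    then show "((\<lambda>m. uu \<alpha> x (fst (p, m)) * vv \<alpha> (snd (p, m))) has_sum uu \<alpha> x p * V) UNIV"
      by simp
  next
    show "(\<lambda>p. uu \<alpha> x p * V) summable_on UNIV"
      by (rule norm_summable_imp_summable_on)
         (use uu0 in \<open>simp add: summable_mult2 summable_uu abs_mult\<close>)
  next
    fix p m show "uu \<alpha> x (fst (p, m)) * vv \<alpha> (snd (p, m)) \<ge> 0"
      using uu0 vv_nonneg[OF assms] by simp
  qed
  have "Infinite_Sum.abs_summable_on (ff \<alpha> x) UNIV"
  proof (rule Infinite_Sum.abs_summable_on_comparison_test)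
    show "Infinite_Sum.abs_summable_on (\<lambda>pm. uu \<alpha> x (fst pm) * vv \<alpha> (snd pm)) UNIV"
      using g uu0 vv_nonneg[OF assms] by (simp add: abs_mult)
    fix pm :: "nat \<times> nat"
    show "norm (ff \<alpha> x pm) \<le> norm (uu \<alpha> x (fst pm) * vv \<alpha> (snd pm))"
      using ff_bound[OF assms, of x "fst pm" "snd pm"] uu0 vv_nonneg[OF assms] by (simp add: abs_mult)
  qed
  then show ?thesis by (rule Infinite_Sum.abs_summable_summable)
qed

lemma part1_sums:
  assumes "\<alpha> > -1"
  shows "(\<lambda>i. a_coef \<alpha> (Suc i) x) sums (- infsum (ff \<alpha> x) UNIV)"
    "(\<lambda>p. bb \<alpha> (Suc p) * x^(Suc p)) sums (- infsum (ff \<alpha> x) UNIV)"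
proof -
  define T where "T = infsum (ff \<alpha> x) UNIV"
  have hT: "(ff \<alpha> x has_sum T) UNIV" unfolding T_def using ff_summable[OF assms] by simp
  have rows: "((\<lambda>m. ff \<alpha> x (p, m)) has_sum (((\<alpha>+1) gchoose p) * x^(Suc p) * SS \<alpha> (Suc p))) UNIV" for p
  proof (rule norm_summable_imp_has_sum)
    show "summable (\<lambda>m. norm (ff \<alpha> x (p, m)))"
      unfolding ff_def using summable_st(2)[OF assms, of "Suc p"]
      by (simp add: abs_mult summable_mult)
    show "(\<lambda>m. ff \<alpha> x (p, m)) sums (((\<alpha>+1) gchoose p) * x^(Suc p) * SS \<alpha> (Suc p))"
      unfolding ff_def fst_conv snd_conv by (intro sums_mult st_sums assms) simp
  qed
  have "((\<lambda>p. ((\<alpha>+1) gchoose p) * x^(Suc p) * SS \<alpha> (Suc p)) has_sum T) UNIV"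
  proof -
    have hT': "(ff \<alpha> x has_sum T) (Sigma UNIV (\<lambda>_. UNIV))" using hT by simp
    show ?thesis by (rule has_sum_Sigma'[OF hT' rows])
  qed
  then have "((\<lambda>p. bb \<alpha> (Suc p) * x^(Suc p)) has_sum (-T)) UNIV"
    unfolding bb_def using has_sum_uminus by (fastforce simp: algebra_simps)
  then show "(\<lambda>p. bb \<alpha> (Suc p) * x^(Suc p)) sums (- infsum (ff \<alpha> x) UNIV)"
    unfolding T_def by (rule has_sum_imp_sums)
  have hT2: "((\<lambda>kp. ff \<alpha> x (snd kp, fst kp - snd kp)) has_sum T) (Sigma UNIV (\<lambda>k. {..k}))"
  proof -
    have "(ff \<alpha> x has_sum T) UNIV = ((\<lambda>kp. ff \<alpha> x (snd kp, fst kp - snd kp)) has_sum T) (Sigma UNIV (\<lambda>k. {..k}))"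
      by (rule has_sum_reindex_bij_witness[where j = "\<lambda>pm. (fst pm + snd pm, fst pm)" and i = "\<lambda>kp. (snd kp, fst kp - snd kp)"])
         auto
    then show ?thesis using hT by simp
  qed
  have "((\<lambda>k. \<Sum>p\<le>k. ff \<alpha> x (p, k - p)) has_sum T) UNIV"
    by (rule has_sum_Sigma'[OF hT2]) simp
  then have "((\<lambda>k. a_coef \<alpha> (Suc k) x) has_sum (-T)) UNIV"
    unfolding a_coef_diag by (rule has_sum_uminusI)
  then show "(\<lambda>i. a_coef \<alpha> (Suc i) x) sums (- infsum (ff \<alpha> x) UNIV)"
    unfolding T_def by (rule has_sum_imp_sums)
qed


lemma refl_real: "rGamma (-\<alpha>-1) * rGamma (\<alpha>+2) = sin (pi * \<alpha>) / pi"
proof -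
  have e1: "1 - complex_of_real (\<alpha>+2) = complex_of_real (-\<alpha>-1)" by simp
  have e2: "complex_of_real pi * complex_of_real (\<alpha>+2) = complex_of_real (pi * (\<alpha>+2))" by simp
  have X: "complex_of_real (rGamma (\<alpha>+2)) * complex_of_real (rGamma (-\<alpha>-1)) =
        complex_of_real (sin (pi * (\<alpha>+2))) / complex_of_real pi"
    using rGamma_reflection_complex[of "complex_of_real (\<alpha>+2)", unfolded e1 e2]
    unfolding rGamma_complex_of_real sin_of_real .
  have "complex_of_real (rGamma (\<alpha>+2) * rGamma (-\<alpha>-1)) = complex_of_real (sin (pi * (\<alpha>+2)) / pi)"
    unfolding of_real_mult of_real_divide by (rule X)
  then have Y: "rGamma (\<alpha>+2) * rGamma (-\<alpha>-1) = sin (pi * (\<alpha>+2)) / pi" by (simp only: of_real_eq_iff)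
  have "pi * (\<alpha>+2) = pi * \<alpha> + 2 * pi" by (simp add: algebra_simps)
  then have "sin (pi * (\<alpha>+2)) = sin (pi * \<alpha>)" by (simp only: sin_periodic)
  with Y show ?thesis by (simp add: mult.commute)
qed

lemma cancel_aux: "(A::real) \<noteq> 0 \<Longrightarrow> P \<noteq> 0 \<Longrightarrow> x / A * (y / P) * (A * P) = x * y"
  by (simp add: divide_simps)

lemma poch_ge_fact: assumes "(\<alpha>::real) > -1" shows "fact m \<le> pochhammer (\<alpha>+4) m"
proof (induction m)
  case 0 then show ?case by simp
next
  case (Suc m)
  have "fact (Suc m) = (real m + 1) * fact m" by simp
  also have "\<dots> \<le> (\<alpha> + 4 + real m) * pochhammer (\<alpha>+4) m"
    by (rule mult_mono[OF _ Suc.IH]) (use assms in simp_all)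
  also have "\<dots> = pochhammer (\<alpha>+4) (Suc m)" by (simp add: pochhammer_rec')
  finally show ?case .
qed

definition hh :: "real \<Rightarrow> real \<Rightarrow> nat \<Rightarrow> real" where
  "hh \<alpha> x m = pochhammer 1 m / (pochhammer (\<alpha>+4) m * fact m) * (-x) ^ m"

lemma hh_alt: "hh \<alpha> x m = (-x)^m / pochhammer (\<alpha>+4) m"
  unfolding hh_def pochhammer_fact[symmetric] by simp

lemma summable_hh: assumes "\<alpha> > -1" shows "summable (hh \<alpha> x)"
proof (rule summable_comparison_test'[OF summable_exp[of "\<bar>x\<bar>"], of 0])
  fix n :: nat
  have P: "fact n \<le> pochhammer (\<alpha>+4) n" by (rule poch_ge_fact[OF assms])
  have F: "(fact n :: real) > 0" by simp
  have P0: "pochhammer (\<alpha>+4) n > 0" using assms by (intro pochhammer_pos) simp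
  have "norm (hh \<alpha> x n) = \<bar>x\<bar>^n / pochhammer (\<alpha>+4) n"
    unfolding hh_alt using P0 by (simp add: power_abs abs_divide)
  also have "\<dots> \<le> \<bar>x\<bar>^n / fact n" by (rule divide_left_mono[OF P]) (use F P0 in \<open>simp_all add: mult_pos_pos\<close>)
  finally show "norm (hh \<alpha> x n) \<le> inverse (fact n) * \<bar>x\<bar> ^ n" by (simp add: divide_inverse mult.commute)
qed

lemma term_eq:
  assumes "\<alpha> > -1"
  shows "bb \<alpha> (Suc m) * x^(Suc m) = (- (sin (pi * \<alpha>) / pi) * (x / ((\<alpha> + 2) * (\<alpha> + 3)))) * hh \<alpha> x m"
proof -
  define K where "K = rGamma (-\<alpha>-1)"
  define P where "P = pochhammer (\<alpha>+4) m"
  have P0: "P > 0" unfolding P_def using assms by (intro pochhammer_pos) simp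
  have r: "rGamma (\<alpha>+2) = (\<alpha>+2) * (\<alpha>+3) * P * rGamma (real m + \<alpha> + 4)"
  proof -
    have "rGamma (\<alpha>+2) = pochhammer (\<alpha>+2) (Suc (Suc m)) * rGamma (\<alpha>+2 + real (Suc (Suc m)))"
      by (rule pochhammer_rGamma)
    also have "pochhammer (\<alpha>+2) (Suc (Suc m)) = (\<alpha>+2) * (\<alpha>+3) * P"
      unfolding P_def pochhammer_rec by (simp add: add_ac mult.assoc)
    also have "\<alpha>+2 + real (Suc (Suc m)) = real m + \<alpha> + 4" by simp
    finally show ?thesis .
  qed
  have s: "sin (pi * \<alpha>) / pi = K * rGamma (\<alpha>+2)" unfolding K_def by (rule refl_real[symmetric])
  have b: "bb \<alpha> (Suc m) = K * (-1)^(Suc m) * rGamma (real m + \<alpha> + 4)"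
    unfolding K_def using bb_closed[OF assms, of "Suc m"] by (simp add: add_ac)
  have a2: "\<alpha> + 2 \<noteq> 0" "\<alpha> + 3 \<noteq> 0" using assms by simp_all
  define R where "R = rGamma (real m + \<alpha> + 4)"
  have Pn: "P \<noteq> 0" using P0 by simp
  have c: "(x / ((\<alpha>+2)*(\<alpha>+3))) * ((-x)^m / P) * ((\<alpha>+2)*(\<alpha>+3)*P) = x * (-x)^m"
    by (rule cancel_aux) (use a2 Pn in simp_all)
  have "(- (K * ((\<alpha>+2)*(\<alpha>+3)*P*R)) * (x / ((\<alpha>+2)*(\<alpha>+3)))) * ((-x)^m / P)
        = - (K * R) * ((x / ((\<alpha>+2)*(\<alpha>+3))) * ((-x)^m / P) * ((\<alpha>+2)*(\<alpha>+3)*P))"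
    by (simp only: mult.assoc mult.commute mult.left_commute minus_mult_left)
  also have "\<dots> = - (K * R) * (x * (-x)^m)" unfolding c ..
  also have "\<dots> = K * (-1)^(Suc m) * R * x^(Suc m)" unfolding power_minus[of x m] by simp
  finally have e: "(- (K * ((\<alpha>+2)*(\<alpha>+3)*P*R)) * (x / ((\<alpha>+2)*(\<alpha>+3)))) * ((-x)^m / P)
        = K * (-1)^(Suc m) * R * x^(Suc m)" .
  show ?thesis unfolding b s hh_alt P_def[symmetric] r R_def[symmetric] e[symmetric] ..
qed

theorem part1:
  assumes "\<alpha> > -1"
  shows "(\<lambda>i. a_coef \<alpha> (Suc i) x) sums
           (- (sin (pi * \<alpha>) / pi) * (x / ((\<alpha> + 2) * (\<alpha> + 3))) * hyp1F1 1 (\<alpha> + 4) (- x))"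
proof -
  have h: "hyp1F1 1 (\<alpha> + 4) (- x) = suminf (hh \<alpha> x)" unfolding hyp1F1_def hh_def ..
  have "(\<lambda>m. (- (sin (pi * \<alpha>) / pi) * (x / ((\<alpha> + 2) * (\<alpha> + 3)))) * hh \<alpha> x m) sums
        ((- (sin (pi * \<alpha>) / pi) * (x / ((\<alpha> + 2) * (\<alpha> + 3)))) * suminf (hh \<alpha> x))"
    by (intro sums_mult summable_sums summable_hh assms)
  then have s1: "(\<lambda>m. bb \<alpha> (Suc m) * x^(Suc m)) sums
        (- (sin (pi * \<alpha>) / pi) * (x / ((\<alpha> + 2) * (\<alpha> + 3))) * hyp1F1 1 (\<alpha> + 4) (- x))"
    unfolding term_eq[OF assms] h .
  from sums_unique2[OF part1_sums(2)[OF assms] s1] part1_sums(1)[OF assms, of x]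
  show ?thesis by simp
qed


lemma poch_nat_fact: "fact N * pochhammer (real N + 1) d = (fact (N + d) :: real)"
proof (induction d)
  case 0 then show ?case by simp
next
  case (Suc d)
  have "fact N * pochhammer (real N + 1) (Suc d) = (real N + 1 + real d) * (fact N * pochhammer (real N + 1) d)"
    by (simp add: pochhammer_rec' algebra_simps)
  also have "\<dots> = (real N + 1 + real d) * fact (N + d)" using Suc.IH by simp
  also have "\<dots> = fact (N + Suc d)" by (simp add: algebra_simps)
  finally show ?case .
qed

lemma vander_aux:
  assumes "d \<le> N"
  shows "(\<Sum>t\<le>N-d. real ((N-d) choose t) * ((-(real N+1)) gchoose (d+t))) = (-1)^N * real ((N+d) choose N)"
proof -
  define M where "M = N - d"
  define b where "b = -(real N + 1)"
  have V: "(\<Sum>k=0..N. (real M gchoose k) * (b gchoose (N - k))) = (real M + b) gchoose N"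
    by (rule gbinomial_Vandermonde)
  have ab: "real M + b = - (real d + 1)" unfolding M_def b_def using assms by (simp add: of_nat_diff)
  have rhs: "(- (real d + 1)) gchoose N = (-1)^N * real ((N+d) choose N)"
  proof -
    have "(- (real d + 1)) gchoose N = (-1)^N * ((real d + 1 + real N - 1) gchoose N)"
      by (rule gbinomial_minus)
    also have "real d + 1 + real N - 1 = real (N + d)" by simp
    finally show ?thesis by (simp add: binomial_gbinomial)
  qed
  have lhs1: "(\<Sum>k=0..N. (real M gchoose k) * (b gchoose (N - k))) = (\<Sum>k\<le>M. (real M gchoose k) * (b gchoose (N - k)))"
  proof -
    have "(\<Sum>k=0..N. (real M gchoose k) * (b gchoose (N - k))) = (\<Sum>k\<in>{..M}. (real M gchoose k) * (b gchoose (N - k)))"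
      unfolding atLeast0AtMost
      by (rule sum.mono_neutral_right) (auto simp: M_def binomial_gbinomial[symmetric])
    then show ?thesis by simp
  qed
  have lhs2: "(\<Sum>k\<le>M. (real M gchoose k) * (b gchoose (N - k))) = (\<Sum>t\<le>M. real (M choose t) * (b gchoose (d + t)))"
  proof -
    have "(\<Sum>k\<le>M. (real M gchoose k) * (b gchoose (N - k))) = (\<Sum>t\<le>M. (real M gchoose (M - t)) * (b gchoose (N - (M - t))))"
      by (rule sum.reindex_bij_witness[where i = "\<lambda>k. M - k" and j = "\<lambda>t. M - t"]) auto
    also have "\<dots> = (\<Sum>t\<le>M. real (M choose t) * (b gchoose (d + t)))"
    proof (rule sum.cong[OF refl])
      fix t assume t: "t \<in> {..M}"
      then have "N - (M - t) = d + t" unfolding M_def using assms by auto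
      moreover have "real M gchoose (M - t) = real (M choose t)"
        using t by (simp add: binomial_gbinomial[symmetric] binomial_symmetric[symmetric])
      ultimately show "(real M gchoose (M - t)) * (b gchoose (N - (M - t))) = real (M choose t) * (b gchoose (d + t))"
        by simp
    qed
    finally show ?thesis .
  qed
  show ?thesis using V unfolding lhs1 lhs2 ab rhs unfolding M_def b_def .
qed

lemma Qd:
  fixes N d :: nat
  shows "(\<Sum>m\<le>N. if d \<le> m then (-1)^m * real (N choose m) * pochhammer (real N + 1) m / fact (m - d) else 0)
       = (-1)^N * real (N choose d) * pochhammer (real N + 1) d"
proof (cases "d \<le> N")
  case False
  then show ?thesis by (auto intro!: sum.neutral)
next
  case True
  define b where "b = -(real N + 1)"
  have tm: "(-1)^m * real (N choose m) * pochhammer (real N + 1) m / fact (m - d)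
        = fact d * real (N choose d) * (real ((N-d) choose (m-d)) * (b gchoose m))" if "d \<le> m" "m \<le> N" for m
  proof -
    have g: "b gchoose m = (-1)^m * pochhammer (real N + 1) m / fact m"
      unfolding b_def by (simp add: gbinomial_pochhammer) (simp add: add_ac)
    have c1: "real (N choose m) * real (m choose d) = real (N choose d) * real ((N-d) choose (m-d))"
      using choose_mult[OF that(1) that(2)] by (simp flip: of_nat_mult)
    have c2: "fact m = fact d * fact (m - d) * (real (m choose d))"
    proof -
      have "real (fact d * fact (m-d) * (m choose d)) = real (fact m)"
        by (simp only: binomial_fact_lemma[OF that(1)])
      then have "fact d * fact (m-d) * real (m choose d) = (fact m :: real)"
        by (simp only: of_nat_mult of_nat_fact)
      then show ?thesis by (rule sym)
    qed
    have cpos: "real (m choose d) > 0" using that(1) by simp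
    have f0: "(fact (m-d) :: real) \<noteq> 0" "(fact d :: real) \<noteq> 0" by simp_all
    have "fact d * real (N choose d) * (real ((N-d) choose (m-d)) * (b gchoose m))
        = fact d * (real (N choose m) * real (m choose d)) * ((-1)^m * pochhammer (real N + 1) m / (fact d * fact (m - d) * (real (m choose d))))"
      unfolding g c1 c2[symmetric] by (simp add: algebra_simps)
    also have "\<dots> = (-1)^m * real (N choose m) * pochhammer (real N + 1) m / fact (m - d)"
      using f0 cpos by (simp add: divide_simps)
    finally show ?thesis by simp
  qed
  have "(\<Sum>m\<le>N. if d \<le> m then (-1)^m * real (N choose m) * pochhammer (real N + 1) m / fact (m - d) else 0)
      = (\<Sum>m\<in>{d..N}. (-1)^m * real (N choose m) * pochhammer (real N + 1) m / fact (m - d))"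
    by (rule sum.mono_neutral_cong_right) auto
  also have "\<dots> = (\<Sum>m\<in>{d..N}. fact d * real (N choose d) * (real ((N-d) choose (m-d)) * (b gchoose m)))"
    by (rule sum.cong[OF refl]) (use tm in auto)
  also have "\<dots> = fact d * real (N choose d) * (\<Sum>m\<in>{d..N}. real ((N-d) choose (m-d)) * (b gchoose m))"
    by (simp add: sum_distrib_left)
  also have "(\<Sum>m\<in>{d..N}. real ((N-d) choose (m-d)) * (b gchoose m)) = (\<Sum>t\<le>N-d. real ((N-d) choose t) * (b gchoose (d+t)))"
    by (rule sum.reindex_bij_witness[where i = "\<lambda>t. d + t" and j = "\<lambda>m. m - d"]) (use True in auto)
  also have "\<dots> = (-1)^N * real ((N+d) choose N)" unfolding b_def by (rule vander_aux[OF True])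
  also have "fact d * real (N choose d) * ((-1)^N * real ((N+d) choose N)) = (-1)^N * real (N choose d) * pochhammer (real N + 1) d"
  proof -
    have "fact d * real ((N+d) choose N) = pochhammer (real N + 1) d"
    proof -
      have a: "fact N * fact d * real ((N+d) choose N) = (fact (N+d) :: real)"
      proof -
        have "real (fact N * fact (N + d - N) * ((N+d) choose N)) = real (fact (N+d))"
          by (simp only: binomial_fact_lemma[of N "N+d"] le_add1)
        then show ?thesis by (simp only: of_nat_mult of_nat_fact add_diff_cancel_left')
      qed
      have "fact N * (fact d * real ((N+d) choose N)) = fact N * pochhammer (real N + 1) d"
        using a poch_nat_fact[of N d] by (simp add: algebra_simps)
      then show ?thesis by simp
    qed
    then show ?thesis by (simp add: algebra_simps)
  qed
  finally show ?thesis .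
qed


lemma gb1: "(real n + 1) gchoose p = real ((n+1) choose p)"
  using binomial_gbinomial[of "n+1" p, where 'a=real] by (simp add: add.commute)

lemma gb2: "(real n + 2) gchoose p = real ((n+2) choose p)"
  using binomial_gbinomial[of "n+2" p, where 'a=real] by (simp add: add.commute)

lemma AA_n: "AA (real n) m = (-1)^m * real ((n+2) choose m) * pochhammer (real (n+2) + 1) m"
  unfolding AA_def gb2 by (simp add: add_ac)

lemma a_zero:
  assumes "i \<ge> 2*n+5"
  shows "a_coef (real n) i x = 0"
  unfolding a_coef_def
proof (rule mult_eq_0_iff[THEN iffD2], rule disjI2, rule sum.neutral, rule ballI)
  fix j assume j: "j \<in> {1..i}"
  show "(-1) ^ (i + j + 1) * ((real n + 1) gchoose (j - 1)) * ((real n + 2) gchoose (i - j)) *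
        pochhammer (real n + 3) (i - j) * x ^ j = 0"
  proof (cases "j - 1 > n + 1")
    case True then show ?thesis unfolding gb1 by simp
  next
    case False then have "i - j > n + 2" using assms j by auto
    then show ?thesis unfolding gb2 by simp
  qed
qed

lemma SS_zero:
  assumes "1 \<le> g" "g \<le> n + 2"
  shows "SS (real n) g = 0"
proof -
  have a: "real n > -1" by simp
  have r: "rGamma (- real n - 1) = 0"
  proof -
    have e: "- real n - 1 = - real (n+1)" by simp
    show ?thesis unfolding e by (rule rGamma_nonpos_Int) (rule minus_of_nat_in_nonpos_Ints)
  qed
  have "bb (real n) g = 0" using bb_closed[OF a assms(1)] r by simp
  moreover have "real ((n+1) choose (g - 1)) > 0" using assms by simp
  ultimately show ?thesis unfolding bb_def gb1 by simp
qed

lemma st_n_zero: "m > n + 2 \<Longrightarrow> st (real n) j m = 0"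
  unfolding st_def gb2 by simp

lemma SS_finite:
  assumes "j \<ge> 1"
  shows "SS (real n) j = (\<Sum>m\<le>n+2. st (real n) j m)"
  unfolding SS_def by (rule suminf_finite) (auto intro: st_n_zero)

lemma binom_fact_real:
  assumes "k \<le> q"
  shows "real (q choose k) / fact q = 1 / (fact k * fact (q - k))"
proof -
  have "real (fact k * fact (q-k) * (q choose k)) = real (fact q)"
    by (simp only: binomial_fact_lemma[OF assms])
  then have e: "fact k * fact (q-k) * real (q choose k) = (fact q :: real)"
    by (simp only: of_nat_mult of_nat_fact)
  have "(fact k :: real) \<noteq> 0" "(fact (q-k) :: real) \<noteq> 0" by simp_all
  then show ?thesis unfolding e[symmetric] using assms by (simp add: divide_simps)
qed

lemma T_big:
  assumes "k \<ge> 1" "p \<ge> k"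
  shows "(\<Sum>m\<le>n+2. real ((p+m+1) choose k) * st (real n) (Suc p) m) = SS (real n) (p+1-k) / fact k"
proof -
  have "(\<Sum>m\<le>n+2. real ((p+m+1) choose k) * st (real n) (Suc p) m) = (\<Sum>m\<le>n+2. st (real n) (p+1-k) m / fact k)"
  proof (rule sum.cong[OF refl])
    fix m
    have kq: "k \<le> m + Suc p" using assms by simp
    have e: "m + Suc p - k = m + (p + 1 - k)" using assms by simp
    show "real ((p+m+1) choose k) * st (real n) (Suc p) m = st (real n) (p+1-k) m / fact k"
    proof -
      have "real ((p+m+1) choose k) * st (real n) (Suc p) m = AA (real n) m * (real ((m + Suc p) choose k) / fact (m + Suc p))"
        unfolding st_AA by (simp add: add_ac)
      also have "\<dots> = AA (real n) m / (fact k * fact (m + (p + 1 - k)))"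
        unfolding binom_fact_real[OF kq] e by simp
      also have "\<dots> = st (real n) (p+1-k) m / fact k" unfolding st_AA by (simp add: mult.commute)
      finally show ?thesis .
    qed
  qed
  also have "\<dots> = SS (real n) (p+1-k) / fact k"
  proof -
    have "p + 1 - k \<ge> 1" using assms by simp
    from SS_finite[OF this, of n] show ?thesis by (simp only: sum_divide_distrib)
  qed
  finally show ?thesis .
qed

lemma T_small:
  assumes "k \<ge> 1" "p < k"
  shows "(\<Sum>m\<le>n+2. real ((p+m+1) choose k) * st (real n) (Suc p) m)
       = (-1)^(n+2) * real ((n+2) choose (k-1-p)) * pochhammer (real (n+2) + 1) (k-1-p) / fact k"
proof -
  define d where "d = k - 1 - p"
  define N where "N = n + 2"
  have "(\<Sum>m\<le>n+2. real ((p+m+1) choose k) * st (real n) (Suc p) m)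
      = (\<Sum>m\<le>N. (if d \<le> m then (-1)^m * real (N choose m) * pochhammer (real N + 1) m / fact (m - d) else 0) / fact k)"
    unfolding N_def
  proof (rule sum.cong[OF refl])
    fix m
    show "real ((p+m+1) choose k) * st (real n) (Suc p) m =
          (if d \<le> m then (-1)^m * real ((n+2) choose m) * pochhammer (real (n+2) + 1) m / fact (m - d) else 0) / fact k"
    proof (cases "d \<le> m")
      case True
      have kq: "k \<le> m + Suc p" using True assms unfolding d_def by simp
      have e: "m + Suc p - k = m - d" using True assms unfolding d_def by simp
      have "real ((p+m+1) choose k) * st (real n) (Suc p) m = AA (real n) m * (real ((m + Suc p) choose k) / fact (m + Suc p))"
        unfolding st_AA by (simp add: add_ac)
      also have "\<dots> = AA (real n) m / (fact k * fact (m - d))"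
        unfolding binom_fact_real[OF kq] e by simp
      also have "\<dots> = (-1)^m * real ((n+2) choose m) * pochhammer (real (n+2) + 1) m / fact (m - d) / fact k"
        unfolding AA_n by (simp add: mult.commute)
      finally show ?thesis using True by simp
    next
      case False
      then have "p + m + 1 < k" using assms unfolding d_def by simp
      then show ?thesis using False by simp
    qed
  qed
  also have "\<dots> = (\<Sum>m\<le>N. (if d \<le> m then (-1)^m * real (N choose m) * pochhammer (real N + 1) m / fact (m - d) else 0)) / fact k"
    by (simp only: sum_divide_distrib)
  also have "\<dots> = (-1)^N * real (N choose d) * pochhammer (real N + 1) d / fact k"
    unfolding Qd ..
  finally show ?thesis unfolding N_def d_def .
qed


lemma sign_aux:
  assumes "k = Suc (p + d)"
  shows "(-1::real)^(n+k) * (-1)^(Suc p) * (-1)^d = (-1)^(n+2)"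
proof -
  have "n + k + Suc p + d = (n+2) + 2*(p+d)" using assms by simp
  then have "(-1::real)^(n + k + Suc p + d) = (-1)^(n+2)" by (simp add: power_add power_mult)
  then show ?thesis by (simp add: power_add)
qed

lemma psi_eq:
  assumes "k = Suc k0"
  shows "real ((n+1) choose p) * x^(Suc p) * (\<Sum>m\<le>n+2. real ((p+m+1) choose k) * st (real n) (Suc p) m)
       = (if p \<le> k0 then (-1)^(n+k) * ff (real n) (-x) (p, k0 - p) else 0)"
proof (cases "p \<le> k0")
  case True
  define d where "d = k0 - p"
  have k: "k = Suc (p + d)" unfolding d_def using True assms by simp
  have T: "(\<Sum>m\<le>n+2. real ((p+m+1) choose k) * st (real n) (Suc p) m)
       = (-1)^(n+2) * real ((n+2) choose d) * pochhammer (real (n+2) + 1) d / fact k"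
    using T_small[of k p n] assms True unfolding d_def by simp
  have ffx: "ff (real n) (-x) (p, k0 - p) = real ((n+1) choose p) * ((-1)^(Suc p) * x^(Suc p)) *
        ((-1)^d * real ((n+2) choose d) * pochhammer (real (n+2) + 1) d / fact k)"
  proof -
    have "d + Suc p = k" using k by simp
    then show ?thesis unfolding ff_def st_AA AA_n d_def[symmetric] gb1 fst_conv snd_conv
      by (simp add: power_minus[of x])
  qed
  have sg: "(-1::real)^(n+k) * (-1)^(Suc p) * (-1)^d = (-1)^(n+2)" by (rule sign_aux[OF k])
  have "(-1)^(n+k) * ff (real n) (-x) (p, k0 - p) = real ((n+1) choose p) * x^(Suc p) *
        (((-1::real)^(n+k) * (-1)^(Suc p) * (-1)^d) * real ((n+2) choose d) * pochhammer (real (n+2) + 1) d / fact k)"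
    unfolding ffx by (simp add: mult_ac)
  also have "\<dots> = real ((n+1) choose p) * x^(Suc p) * (\<Sum>m\<le>n+2. real ((p+m+1) choose k) * st (real n) (Suc p) m)"
    unfolding sg T ..
  finally show ?thesis using True by simp
next
  case False
  show ?thesis
  proof (cases "p \<le> n + 1")
    case True
    have "SS (real n) (p+1-k) = 0" by (rule SS_zero) (use False True assms in simp_all)
    then show ?thesis using T_big[of k p n] False assms by simp
  next
    case False2: False
    then show ?thesis using False by simp
  qed
qed

lemma part2_sum:
  assumes "k \<ge> 1"
  shows "(\<Sum>i<2*n+5. real ((i+k) choose k) * a_coef (real n) (i+k) x) = (-1)^(n+k) * a_coef (real n) k (-x)"
proof -
  define L where "L = 2*n+5"
  obtain k0 where k0: "k = Suc k0" using assms by (cases k) auto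
  define R where "R = k0 + L"
  define g where "g = (\<lambda>p m. real ((p+m+1) choose k) * ff (real n) x (p, m))"
  define f where "f = (\<lambda>q. real ((q+1) choose k) * a_coef (real n) (Suc q) x)"
  define T where "T = (\<lambda>p. (\<Sum>m\<le>n+2. real ((p+m+1) choose k) * st (real n) (Suc p) m))"
  have A: "(\<Sum>i<L. real ((i+k) choose k) * a_coef (real n) (i+k) x) = (\<Sum>q<R. f q)"
  proof -
    have "(\<Sum>i<L. real ((i+k) choose k) * a_coef (real n) (i+k) x) = (\<Sum>i<L. f (i + k0))"
      unfolding f_def k0 by simp
    also have "\<dots> = sum f {k0..<L+k0}"
      using sum.shift_bounds_nat_ivl[of f 0 k0 L] by (simp add: lessThan_atLeast0)
    also have "\<dots> = (\<Sum>q<R. f q)"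
    proof (rule sum.mono_neutral_left)
      show "\<forall>q\<in>{..<R} - {k0..<L + k0}. f q = 0"
      proof
        fix q assume "q \<in> {..<R} - {k0..<L + k0}"
        then have "q + 1 < k" unfolding R_def k0 by auto
        then have "(q + 1) choose k = 0" by (rule binomial_eq_0)
        then show "f q = 0" unfolding f_def by simp
      qed
    qed (auto simp: R_def)
    finally show ?thesis .
  qed
  have B: "f q = - (\<Sum>p\<le>q. g p (q - p))" for q
  proof -
    have "f q = - (\<Sum>p\<le>q. real ((q+1) choose k) * ff (real n) x (p, q - p))"
      unfolding f_def a_coef_diag by (simp add: sum_distrib_left)
    also have "(\<Sum>p\<le>q. real ((q+1) choose k) * ff (real n) x (p, q - p)) = (\<Sum>p\<le>q. g p (q - p))"
      unfolding g_def by (rule sum.cong[OF refl]) simp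
    finally show ?thesis .
  qed
  have C: "(\<Sum>q<R. \<Sum>p\<le>q. g p (q - p)) = (\<Sum>(p,m)\<in>{(p,m). p+m<R}. g p m)"
    by (rule sum.triangle_reindex[symmetric])
  have D: "(\<Sum>(p,m)\<in>{(p,m). p+m<R}. g p m) = (\<Sum>(p,m)\<in>{..n+1}\<times>{..n+2}. g p m)"
  proof (rule sum.mono_neutral_right)
    show "finite {(p,m). p+m<R}"
      by (rule finite_subset[of _ "{..<R}\<times>{..<R}"]) auto
    show "{..n+1}\<times>{..n+2} \<subseteq> {(p,m). p+m<R}" unfolding R_def L_def by auto
    show "\<forall>i\<in>{(p,m). p+m<R} - {..n+1}\<times>{..n+2}. (case i of (p, m) \<Rightarrow> g p m) = 0"
    proof
      fix i assume H: "i \<in> {(p,m). p+m<R} - {..n+1}\<times>{..n+2}"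
      obtain p m where i0: "i = (p,m)" by (cases i)
      have "\<not> (p \<le> n+1 \<and> m \<le> n+2)" using H unfolding i0 by auto
      then have "p > n+1 \<or> m > n+2" by linarith
      note i = i0 this
      show "(case i of (p, m) \<Rightarrow> g p m) = 0"
        using i st_n_zero[of n m] unfolding g_def ff_def gb1 by auto
    qed
  qed
  have E: "(\<Sum>(p,m)\<in>{..n+1}\<times>{..n+2}. g p m) = (\<Sum>p\<le>n+1. real ((n+1) choose p) * x^(Suc p) * T p)"
  proof -
    have "(\<Sum>(p,m)\<in>{..n+1}\<times>{..n+2}. g p m) = (\<Sum>p\<le>n+1. \<Sum>m\<le>n+2. g p m)"
      by (rule sum.cartesian_product[symmetric])
    also have "\<dots> = (\<Sum>p\<le>n+1. real ((n+1) choose p) * x^(Suc p) * T p)"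
      unfolding g_def ff_def T_def gb1 fst_conv snd_conv sum_distrib_left
      by (rule sum.cong[OF refl], rule sum.cong[OF refl]) (simp add: mult_ac)
    finally show ?thesis .
  qed
  define M where "M = n + 1 + k0"
  have F: "(\<Sum>p\<le>n+1. real ((n+1) choose p) * x^(Suc p) * T p) = (\<Sum>p\<le>M. real ((n+1) choose p) * x^(Suc p) * T p)"
    by (rule sum.mono_neutral_left) (auto simp: M_def)
  also have "\<dots> = (\<Sum>p\<le>M. if p \<le> k0 then (-1)^(n+k) * ff (real n) (-x) (p, k0 - p) else 0)"
    unfolding T_def by (rule sum.cong[OF refl], rule psi_eq[OF k0])
  also have "\<dots> = (\<Sum>p\<in>{p\<in>{..M}. p \<le> k0}. (-1)^(n+k) * ff (real n) (-x) (p, k0 - p))"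
    by (rule sum.inter_filter[symmetric]) simp
  also have "{p\<in>{..M}. p \<le> k0} = {..k0}" unfolding M_def by auto
  also have "(\<Sum>p\<in>{..k0}. (-1)^(n+k) * ff (real n) (-x) (p, k0 - p)) = - ((-1)^(n+k) * a_coef (real n) k (-x))"
    unfolding k0 a_coef_diag by (simp add: sum_distrib_left)
  finally have G: "(\<Sum>p\<le>n+1. real ((n+1) choose p) * x^(Suc p) * T p) = - ((-1)^(n+k) * a_coef (real n) k (-x))" .
  have "(\<Sum>i<2*n+5. real ((i+k) choose k) * a_coef (real n) (i+k) x) = (\<Sum>q<R. f q)"
    using A unfolding L_def .
  also have "\<dots> = - (\<Sum>q<R. \<Sum>p\<le>q. g p (q - p))" unfolding B by (simp add: sum_negf)
  also have "\<dots> = (-1)^(n+k) * a_coef (real n) k (-x)" unfolding C D E G by simp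
  finally show ?thesis .
qed

theorem theorem2:
  fixes \<alpha> x :: real
  assumes "\<alpha> > -1"
  shows "((\<lambda>i. a_coef \<alpha> (Suc i) x) sums
           (- (sin (pi * \<alpha>) / pi) * (x / ((\<alpha> + 2) * (\<alpha> + 3))) * hyp1F1 1 (\<alpha> + 4) (- x))) \<and>
         (\<forall>(n::nat) (k::nat). \<alpha> = real n \<and> k \<ge> 1 \<longrightarrow>
           (\<lambda>i. real ((i + k) choose k) * a_coef \<alpha> (i + k) x) sums ((-1) ^ (n + k) * a_coef \<alpha> k (- x)))"
proof (intro conjI allI impI)
  show "(\<lambda>i. a_coef \<alpha> (Suc i) x) sums
           (- (sin (pi * \<alpha>) / pi) * (x / ((\<alpha> + 2) * (\<alpha> + 3))) * hyp1F1 1 (\<alpha> + 4) (- x))"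
    by (rule part1[OF assms])
next
  fix n k :: nat
  assume H: "\<alpha> = real n \<and> k \<ge> 1"
  then have a: "\<alpha> = real n" and k: "k \<ge> 1" by auto
  have "(\<lambda>i. real ((i + k) choose k) * a_coef (real n) (i + k) x) sums
        (\<Sum>i\<in>{..<2*n+5}. real ((i + k) choose k) * a_coef (real n) (i + k) x)"
  proof (rule sums_finite)
    fix i assume "i \<notin> {..<2*n+5}"
    then have "i + k \<ge> 2*n+5" by simp
    then show "real ((i + k) choose k) * a_coef (real n) (i + k) x = 0" by (simp add: a_zero)
  qed simp
  then show "(\<lambda>i. real ((i + k) choose k) * a_coef \<alpha> (i + k) x) sums ((-1) ^ (n + k) * a_coef \<alpha> k (- x))"
    unfolding a using part2_sum[OF k, of n x] by simp
qed

end
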